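(* Let $0<a<1$, let $\hat c\in\{0,-1,-2,\dots\}$, and let $\mathcal F=(F_1,F_2)$ be a pair of finite sets of positive integers satisfying condition (C): $\{0,1,\dots,-\hat c\}\subset F_1\cup(-\hat c-F_2)$. For every sequence of real numbers $\hat c_s\notin\{0,-1,-2,\dots\}$ with $\lim_{s\to\infty}\hat c_s=\hat c$ we have $\lim_{s\to\infty}\rho^{\mathcal F}_{a,\hat c_s}(x)=\nu^a_{\hat c;\mathcal F}(x)$ for every $x\in\mathbb N$ (the mass at $x$). Moreover, if $\nu^a_{\hat c;\mathcal F}$ is a positive measure, then the numbers $\hat c_s\notin\{0,-1,-2,\dots\}$ with $\hat c_s\to\hat c$ can be chosen so that all the measures $\rho^{\mathcal F}_{a,\hat c_s}$ are positive as well.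
   Context: $\mathbb N=\{0,1,2,\dots\}$. For a finite set $F$ and integer $t$, $t-F=\{t-f:f\in F\}$. For $\hat c\in\{0,-1,-2,\dots\}$ and $\mathcal F$ satisfying (C), $\mathcal H=[(F_1\cup(-\hat c-F_2))\setminus\{0,1,\dots,-\hat c\}]\cup[F_1\cap(-\hat c-F_2)]$ and $\nu^a_{\hat c;\mathcal F}=\sum_{x\in\mathbb N\setminus F_1}\prod_{h\in\mathcal H}(x-h)\,a^x\,\delta_x$. For $d\notin\{0,-1,-2,\dots\}$, $\rho^{\mathcal F}_{a,d}=\sum_{x=0}^\infty\prod_{f\in F_1}(x-f)\prod_{f\in F_2}(x+d+f)\frac{a^x\Gamma(x+d)}{x!}\delta_x$. A discrete measure is positive if all its masses are nonnegative (and not all zero). *)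

theory Defs
  imports "HOL-Analysis.Analysis"
begin

definition condC :: "int \<Rightarrow> int set \<Rightarrow> int set \<Rightarrow> bool" where
  "condC c F1 F2 \<longleftrightarrow> {0..-c} \<subseteq> F1 \<union> ((\<lambda>f. -c - f) ` F2)"

definition Hset :: "int \<Rightarrow> int set \<Rightarrow> int set \<Rightarrow> int set" where
  "Hset c F1 F2 =
     ((F1 \<union> ((\<lambda>f. -c - f) ` F2)) - {0..-c}) \<union> (F1 \<inter> ((\<lambda>f. -c - f) ` F2))"

definition nu :: "real \<Rightarrow> int \<Rightarrow> int set \<Rightarrow> int set \<Rightarrow> nat \<Rightarrow> real" where
  "nu a c F1 F2 x =
     (if int x \<in> F1 then 0
      else (\<Prod>h\<in>Hset c F1 F2. (real x - real_of_int h)) * a ^ x)"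

definition rho :: "int set \<Rightarrow> int set \<Rightarrow> real \<Rightarrow> real \<Rightarrow> nat \<Rightarrow> real" where
  "rho F1 F2 a d x =
     (\<Prod>f\<in>F1. (real x - real_of_int f)) * (\<Prod>f\<in>F2. (real x + d + real_of_int f))
       * a ^ x * Gamma (real x + d) / fact x"

definition positive_discrete :: "(nat \<Rightarrow> real) \<Rightarrow> bool" where
  "positive_discrete \<mu> \<longleftrightarrow> (\<forall>x. \<mu> x \<ge> 0) \<and> (\<exists>x. \<mu> x \<noteq> 0)"

end

theory Submission
  imports Defs
begin

lemma identA:
  fixes c :: int and F1 F2 :: "int set" and y :: real
  assumes "finite F1" "finite F2" "\<forall>f\<in>F1. f > 0" "\<forall>f\<in>F2. f > 0" "condC c F1 F2"
  shows "(\<Prod>f\<in>F1. y - of_int f) * (\<Prod>g\<in>(\<lambda>f. -c - f) ` F2. y - of_int g)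
       = (\<Prod>h\<in>Hset c F1 F2. y - of_int h) * (\<Prod>j\<in>{0..-c}. y - of_int j)"
proof -
  define G where "G = (\<lambda>f. -c - f) ` F2"
  define J where "J = {0..-c}"
  have fG: "finite G" using assms(2) by (simp add: G_def)
  have JU: "J \<subseteq> F1 \<union> G" using assms(5) by (simp add: condC_def G_def J_def)
  have IJ: "F1 \<inter> G \<subseteq> J"
  proof
    fix g assume "g \<in> F1 \<inter> G"
    then obtain f where "f \<in> F2" "g = -c - f" "g \<in> F1" by (auto simp: G_def)
    with assms(3,4) have "g > 0" "f > 0" by auto
    with \<open>g = -c - f\<close> show "g \<in> J" by (simp add: J_def)
  qed
  have H: "Hset c F1 F2 = ((F1 \<union> G) - J) \<union> (F1 \<inter> G)" by (simp add: Hset_def G_def J_def)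
  let ?p = "\<lambda>S. \<Prod>s\<in>S. y - of_int s"
  have 1: "?p F1 * ?p G = ?p (F1 \<union> G) * ?p (F1 \<inter> G)"
    by (rule prod.union_inter[OF assms(1) fG, symmetric])
  have 2: "?p (F1 \<union> G) = ?p ((F1 \<union> G) - J) * ?p J"
    using prod.subset_diff[OF JU] assms(1) fG by simp
  have 3: "?p (Hset c F1 F2) = ?p ((F1 \<union> G) - J) * ?p (F1 \<inter> G)"
    unfolding H by (rule prod.union_disjoint) (use assms(1) fG IJ in auto)
  show ?thesis unfolding G_def[symmetric] J_def[symmetric] 1 2 3 by simp
qed

lemma gammaB:
  fixes d :: real and c :: int and x :: nat
  assumes "d \<notin> \<int>" "c \<le> 0"
  shows "Gamma (real x + d) * (\<Prod>j\<in>{0..-c}. real x + d - of_int c - of_int j) = Gamma (real x + d - of_int c + 1)"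
proof -
  define z where "z = real x + d"
  have zn: "z \<notin> \<int>\<^sub>\<le>\<^sub>0"
  proof
    assume "z \<in> \<int>\<^sub>\<le>\<^sub>0"
    then obtain m where "z = of_int m" by (auto elim: nonpos_Ints_cases)
    hence "d = of_int (m - int x)" by (simp add: z_def)
    with assms(1) show False by auto
  qed
  define n where "n = nat (1 - c)"
  have p1: "pochhammer z n = Gamma (z + of_nat n) / Gamma z" by (rule pochhammer_Gamma[OF zn])
  have g0: "Gamma z \<noteq> 0" using zn by (simp add: Gamma_eq_zero_iff)
  have e2: "z + of_nat n = real x + d - of_int c + 1" using assms(2) by (simp add: z_def n_def)
  have p2: "pochhammer z n = (\<Prod>j\<in>{0..-c}. real x + d - of_int c - of_int j)"
  proof -
    have "pochhammer z n = (\<Prod>i\<in>{0..<n}. z + of_nat i)" by (simp add: pochhammer_prod)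
    also have "\<dots> = (\<Prod>j\<in>{0..-c}. real x + d - of_int c - of_int j)"
      by (rule prod.reindex_bij_witness[of _ "\<lambda>j. nat (-c - j)" "\<lambda>i. -c - int i"])
         (use assms(2) in \<open>auto simp: n_def z_def\<close>)
    finally show ?thesis .
  qed
  have e1: "Gamma (z + of_nat n) = Gamma z * (\<Prod>j\<in>{0..-c}. real x + d - of_int c - of_int j)"
    using p1 p2 g0 by (simp add: field_simps)
  show ?thesis using e1 e2 unfolding z_def by metis
qed


lemma nonint_ne:
  fixes d :: real
  assumes "d \<notin> \<int>"
  shows "real x + d - of_int c - of_int j \<noteq> 0"
proof
  assume "real x + d - of_int c - of_int j = 0"
  hence "d = of_int (c + j - int x)" by simp
  with assms show False by auto
qed

lemma rho_eq:
  fixes c :: int and F1 F2 :: "int set" and d :: real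
  assumes "finite F1" "finite F2" "\<forall>f\<in>F1. f > 0" "\<forall>f\<in>F2. f > 0" "condC c F1 F2"
    and "c \<le> 0" "d \<notin> \<int>"
  shows "rho F1 F2 a d x =
    (\<Prod>f\<in>F1. real x - of_int f) / (\<Prod>f\<in>F1. real x + d - of_int c - of_int f)
    * (\<Prod>h\<in>Hset c F1 F2. real x + d - of_int c - of_int h) * a ^ x
    * Gamma (real x + d - of_int c + 1) / fact x"
proof -
  define y where "y = real x + d - of_int c"
  have inj: "inj_on (\<lambda>f. -c - f) F2" by (auto simp: inj_on_def)
  have PF2: "(\<Prod>f\<in>F2. real x + d + of_int f) = (\<Prod>g\<in>(\<lambda>f. -c - f) ` F2. y - of_int g)"
    by (simp add: prod.reindex[OF inj] y_def algebra_simps)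
  have GB: "Gamma (real x + d) * (\<Prod>j\<in>{0..-c}. y - of_int j) = Gamma (y + 1)"
    using gammaB[OF assms(7,6), of x] by (simp add: y_def)
  have IA: "(\<Prod>f\<in>F1. y - of_int f) * (\<Prod>g\<in>(\<lambda>f. -c - f) ` F2. y - of_int g)
       = (\<Prod>h\<in>Hset c F1 F2. y - of_int h) * (\<Prod>j\<in>{0..-c}. y - of_int j)"
    by (rule identA[OF assms(1-5)])
  have nJ: "(\<Prod>j\<in>{0..-c}. y - of_int j) \<noteq> 0"
    using nonint_ne[OF assms(7)] by (simp add: y_def prod_zero_iff)
  have n1: "(\<Prod>f\<in>F1. y - of_int f) \<noteq> 0"
    using nonint_ne[OF assms(7)] assms(1) by (simp add: y_def prod_zero_iff)
  have G: "Gamma (real x + d) = Gamma (y + 1) / (\<Prod>j\<in>{0..-c}. y - of_int j)"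
    using GB nJ by (simp add: field_simps)
  have Q: "(\<Prod>g\<in>(\<lambda>f. -c - f) ` F2. y - of_int g) =
      (\<Prod>h\<in>Hset c F1 F2. y - of_int h) * (\<Prod>j\<in>{0..-c}. y - of_int j) / (\<Prod>f\<in>F1. y - of_int f)"
    using IA n1 by (simp add: field_simps)
  show ?thesis
    unfolding rho_def PF2 G Q y_def[symmetric] using nJ n1 by (simp add: field_simps)
qed


lemma near_nonint:
  fixes d :: real and c :: int
  assumes "c \<le> 0" "d \<notin> \<int>\<^sub>\<le>\<^sub>0" "\<bar>d - of_int c\<bar> < 1/2"
  shows "d \<notin> \<int>"
proof
  assume "d \<in> \<int>"
  then obtain m where m: "d = of_int m" by (auto elim: Ints_cases)
  with assms(3) have "\<bar>real_of_int (m - c)\<bar> < 1/2" by simp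
  hence "m = c" by linarith
  with m assms(1,2) show False by (auto simp: nonpos_Ints_def)
qed

lemma part1:
  fixes c :: int and F1 F2 :: "int set" and cs :: "nat \<Rightarrow> real"
  assumes "finite F1" "finite F2" "\<forall>f\<in>F1. f > 0" "\<forall>f\<in>F2. f > 0" "condC c F1 F2"
    and "c \<le> 0" "\<forall>s. cs s \<notin> \<int>\<^sub>\<le>\<^sub>0" "cs \<longlonglongrightarrow> real_of_int c"
  shows "(\<lambda>s. rho F1 F2 a (cs s) x) \<longlonglongrightarrow> nu a c F1 F2 x"
proof (cases "int x \<in> F1")
  case True
  have z: "(\<Prod>f\<in>F1. real x - of_int f) = 0"
    using prod_zero[OF assms(1), of "\<lambda>f. real x - of_int f"] True by force
  have "\<And>s. rho F1 F2 a (cs s) x = 0"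
    unfolding rho_def z by simp
  moreover have "nu a c F1 F2 x = 0" using True by (simp add: nu_def)
  ultimately show ?thesis by simp
next
  case False
  define Fn where "Fn = (\<lambda>d::real. (\<Prod>f\<in>F1. real x - of_int f) / (\<Prod>f\<in>F1. real x + d - of_int c - of_int f)
    * (\<Prod>h\<in>Hset c F1 F2. real x + d - of_int c - of_int h) * a ^ x
    * Gamma (real x + d - of_int c + 1) / fact x)"
  have P1: "(\<Prod>f\<in>F1. real x - of_int f) \<noteq> 0" using False assms(1) by (auto simp: prod_zero_iff) (metis of_int_eq_iff of_int_of_nat_eq)
  have cont: "isCont Fn (of_int c)"
    unfolding Fn_def using P1
    by (intro continuous_intros) auto
  have val: "Fn (of_int c) = nu a c F1 F2 x"
    using P1 False by (simp add: Fn_def nu_def Gamma_fact add.commute)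
  have lim: "(\<lambda>s. Fn (cs s)) \<longlonglongrightarrow> nu a c F1 F2 x"
    using isCont_tendsto_compose[OF cont assms(8)] val by simp
  have ev: "eventually (\<lambda>s. \<bar>cs s - of_int c\<bar> < 1/2) sequentially"
    using assms(8) unfolding tendsto_iff dist_real_def by (metis half_gt_zero_iff zero_less_one)
  have "eventually (\<lambda>s. Fn (cs s) = rho F1 F2 a (cs s) x) sequentially"
    using ev
  proof eventually_elim
    case (elim s)
    have "cs s \<notin> \<int>" using near_nonint[OF assms(6) _ elim] assms(7) by blast
    then show ?case unfolding Fn_def by (rule rho_eq[OF assms(1-6), symmetric])
  qed
  then show ?thesis using lim by (rule Lim_transform_eventually[rotated])
qed


lemma rho_zero:
  assumes "finite F1" "int x \<in> F1"
  shows "rho F1 F2 a d x = 0"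
proof -
  have z: "(\<Prod>f\<in>F1. real x - of_int f) = 0"
    using prod_zero[OF assms(1), of "\<lambda>f. real x - of_int f"] assms(2) by force
  show ?thesis unfolding rho_def z by simp
qed

lemma rho_pos:
  fixes d a :: real
  assumes "\<forall>f\<in>F1. real_of_int f < real x" "real x + d > 0" "\<forall>f\<in>F2. f > 0" "a > 0"
  shows "rho F1 F2 a d x > 0"
proof -
  have "(\<Prod>f\<in>F1. real x - of_int f) > 0" using assms(1) by (intro prod_pos) auto
  moreover have "(\<Prod>f\<in>F2. real x + d + of_int f) > 0"
    using assms(2,3) by (intro prod_pos) (smt (verit) of_int_0_less_iff)
  moreover have "Gamma (real x + d) > 0" using assms(2) by simp
  ultimately show ?thesis unfolding rho_def using assms(4) by simp
qed

lemma nu_pos: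
  fixes c :: int
  assumes "\<forall>f\<in>F2. f > 0" "a > 0" "positive_discrete (nu a c F1 F2)" "int x \<notin> F1"
  shows "nu a c F1 F2 x > 0"
proof -
  have nH: "int x \<notin> Hset c F1 F2"
  proof
    assume "int x \<in> Hset c F1 F2"
    with assms(4) obtain f where f: "f \<in> F2" "int x = -c - f" "int x \<notin> {0..-c}"
      unfolding Hset_def by auto
    with assms(1) show False by auto
  qed
  have "(\<Prod>h\<in>Hset c F1 F2. real x - real_of_int h) \<noteq> 0"
  proof
    assume "(\<Prod>h\<in>Hset c F1 F2. real x - real_of_int h) = 0"
    then obtain h where "h \<in> Hset c F1 F2" "real x = real_of_int h"
      by (metis (no_types, lifting) eq_iff_diff_eq_0 prod.infinite prod_zero_iff zero_neq_one)
    hence "h = int x" by (metis of_int_eq_iff of_int_of_nat_eq)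
    with nH \<open>h \<in> _\<close> show False by simp
  qed
  hence "nu a c F1 F2 x \<noteq> 0" using assms(2,4) by (simp add: nu_def)
  moreover have "nu a c F1 F2 x \<ge> 0" using assms(3) by (simp add: positive_discrete_def)
  ultimately show ?thesis by simp
qed


lemma part2:
  fixes a :: real and c :: int and F1 F2 :: "int set"
  assumes "0 < a" "c \<le> 0"
    and "finite F1" "finite F2" "\<forall>f\<in>F1. f > 0" "\<forall>f\<in>F2. f > 0"
    and "condC c F1 F2" "positive_discrete (nu a c F1 F2)"
  shows "\<exists>cs :: nat \<Rightarrow> real. (\<forall>s. cs s \<notin> \<int>\<^sub>\<le>\<^sub>0) \<and> cs \<longlonglongrightarrow> real_of_int c \<and>
               (\<forall>s. positive_discrete (rho F1 F2 a (cs s)))"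
proof -
  define cs0 where "cs0 = (\<lambda>s::nat. real_of_int c + 1 / (real s + 2))"
  have gt: "cs0 s > of_int c" for s by (simp add: cs0_def)
  have nonint: "cs0 s \<notin> \<int>" for s
  proof
    assume "cs0 s \<in> \<int>"
    then obtain m where m: "cs0 s = of_int m" by (auto elim: Ints_cases)
    hence e: "1 / (real s + 2) = of_int (m - c)" by (simp add: cs0_def)
    have "0 < 1 / (real s + 2)" "1 / (real s + 2) < 1" by (auto simp: field_simps)
    with e have "0 < m - c" "m - c < 1" by simp_all
    thus False by simp
  qed
  have np: "cs0 s \<notin> \<int>\<^sub>\<le>\<^sub>0" for s using nonint[of s] nonpos_Ints_subset_Ints by blast
  have l0: "(\<lambda>s::nat. 1 / (real s + 2)) \<longlonglongrightarrow> 0"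
  proof -
    have "(\<lambda>n::nat. 1 / real (n + 2)) \<longlonglongrightarrow> 0"
      using LIMSEQ_ignore_initial_segment[OF lim_1_over_n, of 2] by simp
    thus ?thesis by (simp add: add.commute)
  qed
  have lim: "cs0 \<longlonglongrightarrow> real_of_int c"
    unfolding cs0_def using tendsto_add[OF tendsto_const l0] by simp
  define N where "N = nat (Max (insert (-c) F1))"
  have bigx: "\<forall>f\<in>F1. real_of_int f < real x" "real_of_int (-c) < real x" if "x > N" for x
  proof -
    have "Max (insert (-c) F1) < int x" using that by (simp add: N_def)
    hence "\<forall>f\<in>insert (-c) F1. f < int x" using assms(3) by (meson Max_less_iff finite_insert insert_not_empty)
    thus "\<forall>f\<in>F1. real_of_int f < real x" "real_of_int (-c) < real x" by auto
  qed
  have posbig: "rho F1 F2 a (cs0 s) x > 0" if "x > N" for x s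
  proof (rule rho_pos[OF bigx(1)[OF that] _ assms(6,1)])
    show "real x + cs0 s > 0" using bigx(2)[OF that] gt[of s] by simp
  qed
  have evsmall: "eventually (\<lambda>s. \<forall>x\<in>{..N}. rho F1 F2 a (cs0 s) x \<ge> 0) sequentially"
  proof (rule eventually_ball_finite)
    show "finite {..N}" by simp
    show "\<forall>x\<in>{..N}. eventually (\<lambda>s. rho F1 F2 a (cs0 s) x \<ge> 0) sequentially"
    proof
      fix x assume "x \<in> {..N}"
      show "eventually (\<lambda>s. rho F1 F2 a (cs0 s) x \<ge> 0) sequentially"
      proof (cases "int x \<in> F1")
        case True thus ?thesis using rho_zero[OF assms(3) True] by simp
      next
        case False
        have "nu a c F1 F2 x > 0" by (rule nu_pos[OF assms(6,1,8) False])
        moreover have "(\<lambda>s. rho F1 F2 a (cs0 s) x) \<longlonglongrightarrow> nu a c F1 F2 x"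
          by (rule part1[OF assms(3-7,2)]) (use np lim in auto)
        ultimately have "eventually (\<lambda>s. rho F1 F2 a (cs0 s) x > 0) sequentially"
          by (simp add: order_tendstoD(1))
        thus ?thesis by (rule eventually_mono) simp
      qed
    qed
  qed
  then obtain S where S: "\<And>s. s \<ge> S \<Longrightarrow> \<forall>x\<in>{..N}. rho F1 F2 a (cs0 s) x \<ge> 0"
    by (auto simp: eventually_sequentially)
  define cs where "cs = (\<lambda>s. cs0 (s + S))"
  have "positive_discrete (rho F1 F2 a (cs s))" for s
  proof -
    have "rho F1 F2 a (cs s) x \<ge> 0" for x
    proof (cases "x \<le> N")
      case True thus ?thesis using S[of "s + S"] by (simp add: cs_def)
    next
      case False thus ?thesis using posbig[of x "s + S"] by (simp add: cs_def)
    qed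
    moreover have "rho F1 F2 a (cs s) (Suc N) \<noteq> 0" using posbig[of "Suc N" "s + S"] by (simp add: cs_def)
    ultimately show ?thesis unfolding positive_discrete_def by blast
  qed
  moreover have "cs \<longlonglongrightarrow> real_of_int c"
    unfolding cs_def using LIMSEQ_ignore_initial_segment[OF lim, of S] by simp
  moreover have "\<forall>s. cs s \<notin> \<int>\<^sub>\<le>\<^sub>0" using np by (simp add: cs_def)
  ultimately show ?thesis by blast
qed

theorem mainTheorem2:
  fixes a :: real and c :: int and F1 F2 :: "int set"
  assumes "0 < a" "a < 1" "c \<le> 0"
    and "finite F1" "finite F2" "\<forall>f\<in>F1. f > 0" "\<forall>f\<in>F2. f > 0"
    and "condC c F1 F2"
  shows "(\<forall>cs :: nat \<Rightarrow> real. (\<forall>s. cs s \<notin> \<int>\<^sub>\<le>\<^sub>0) \<and> cs \<longlonglongrightarrow> real_of_int c \<longrightarrow>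
            (\<forall>x::nat. (\<lambda>s. rho F1 F2 a (cs s) x) \<longlonglongrightarrow> nu a c F1 F2 x))
       \<and> (positive_discrete (nu a c F1 F2) \<longrightarrow>
            (\<exists>cs :: nat \<Rightarrow> real. (\<forall>s. cs s \<notin> \<int>\<^sub>\<le>\<^sub>0) \<and> cs \<longlonglongrightarrow> real_of_int c \<and>
               (\<forall>s. positive_discrete (rho F1 F2 a (cs s)))))"
  using part1[OF assms(4-8,3)] part2[OF assms(1,3-8)] by blast

end
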